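(* Let $n\geq 3$. The fibration $q:F_{n+m}(\mathbb{R}P^2)/(S_n\times S_m)\to F_n(\mathbb{R}P^2)/S_n$, which forgets the last $m$ points, admits a cross-section (a continuous map $s$ with $q\circ s=\mathrm{id}$) for $m=kn(2n-1)(2n-2)$ with $k\geq 1$, and for $m=2n(n-1)$.
   Context: $F_k(\Sigma)=\{(p_1,\dots,p_k)\in\Sigma^k: p_i\neq p_j\text{ for } i\neq j\}$ is the ordered configuration space of a surface $\Sigma$; $S_k$ acts by permuting coordinates, and $S_n\times S_m\subset S_{n+m}$ permutes the first $n$ and the last $m$ coordinates separately. The map $q$ sends the class of $(p_1,\dots,p_{n+m})$ to the class of $(p_1,\dots,p_n)$. *)

theory Defs
  imports "HOL-Analysis.Analysis"
begin

definition quotient_topology :: "'a topology \<Rightarrow> ('a \<Rightarrow> 'b) \<Rightarrow> 'b topology" where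
  "quotient_topology X f =
     topology (\<lambda>U. U \<subseteq> f ` topspace X \<and> openin X {x \<in> topspace X. f x \<in> U})"

lemma istopology_quotient:
  "istopology (\<lambda>U. U \<subseteq> f ` topspace X \<and> openin X {x \<in> topspace X. f x \<in> U})"
  unfolding istopology_def
proof (rule conjI; intro allI impI)
  fix S T assume a: "S \<subseteq> f ` topspace X \<and> openin X {x \<in> topspace X. f x \<in> S}"
             "T \<subseteq> f ` topspace X \<and> openin X {x \<in> topspace X. f x \<in> T}"
  have "{x \<in> topspace X. f x \<in> S \<inter> T} =
        {x \<in> topspace X. f x \<in> S} \<inter> {x \<in> topspace X. f x \<in> T}" by auto
  moreover have "openin X ({x \<in> topspace X. f x \<in> S} \<inter> {x \<in> topspace X. f x \<in> T})"
    using a by (intro openin_Int) auto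
  ultimately show "S \<inter> T \<subseteq> f ` topspace X \<and> openin X {x \<in> topspace X. f x \<in> S \<inter> T}"
    using a by auto
next
  fix K assume a: "\<forall>S\<in>K. S \<subseteq> f ` topspace X \<and> openin X {x \<in> topspace X. f x \<in> S}"
  have "{x \<in> topspace X. f x \<in> \<Union>K} = (\<Union>S\<in>K. {x \<in> topspace X. f x \<in> S})" by auto
  then show "\<Union>K \<subseteq> f ` topspace X \<and> openin X {x \<in> topspace X. f x \<in> \<Union>K}"
    using a by (auto intro!: openin_Union)
qed

lemma openin_quotient_topology:
  "openin (quotient_topology X f) U \<longleftrightarrow>
     U \<subseteq> f ` topspace X \<and> openin X {x \<in> topspace X. f x \<in> U}"
    unfolding quotient_topology_def
  by (subst topology_inverse'[OF istopology_quotient]) (rule refl)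

text \<open>The real projective plane: the unit sphere in \<open>\<real>\<^sup>3\<close> modulo the antipodal map;
  a point of \<open>RP2\<close> is the antipodal pair \<open>{x, -x}\<close>.\<close>
definition RP2 :: "(real^3) set topology" where
  "RP2 = quotient_topology (top_of_set (sphere 0 1)) (\<lambda>x. {x, -x})"

text \<open>Ordered configuration space \<open>F_k(X)\<close>: injective maps \<open>{0..<k} \<rightarrow> X\<close>
  (extensional, i.e. elements of \<open>PiE {..<k} (\<lambda>_. topspace X)\<close>), with the
  subspace topology of the product topology.\<close>
definition conf :: "'a topology \<Rightarrow> nat \<Rightarrow> (nat \<Rightarrow> 'a) topology" where
  "conf X k = subtopology (product_topology (\<lambda>_. X) {..<k}) {p. inj_on p {..<k}}"

text \<open>Unordered configuration space \<open>F_n(X)/S_n\<close>: the orbit of \<open>p\<close> is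
  identified with the \<open>n\<close>-element set \<open>p ` {..<n}\<close>; quotient topology.\<close>
definition uconf :: "'a topology \<Rightarrow> nat \<Rightarrow> 'a set topology" where
  "uconf X n = quotient_topology (conf X n) (\<lambda>p. p ` {..<n})"

text \<open>\<open>F_{n+m}(X)/(S_n \<times> S_m)\<close>: the orbit of \<open>p\<close> is identified with the pair
  \<open>(p ` {..<n}, p ` {n..<n+m})\<close>; quotient topology.\<close>
definition pconf :: "'a topology \<Rightarrow> nat \<Rightarrow> nat \<Rightarrow> ('a set \<times> 'a set) topology" where
  "pconf X n m = quotient_topology (conf X (n + m)) (\<lambda>p. (p ` {..<n}, p ` {n..<n+m}))"

text \<open>The forgetful map \<open>q\<close> (forget the last \<open>m\<close> points) is \<open>fst\<close> in this model.
  Existence of a continuous cross-section of \<open>q\<close>.\<close>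
definition has_cross_section :: "'a topology \<Rightarrow> nat \<Rightarrow> nat \<Rightarrow> bool" where
  "has_cross_section X n m \<longleftrightarrow>
     (\<exists>s. continuous_map (uconf X n) (pconf X n m) s \<and>
          (\<forall>x \<in> topspace (uconf X n). fst (s x) = x))"

end

theory Submission
  imports Defs
begin


lemma topspace_quotient_topology:
  "topspace (quotient_topology X f) = f ` topspace X"
proof
  have "openin (quotient_topology X f) (f ` topspace X)"
    by (auto simp: openin_quotient_topology cong: conj_cong)
  then show "f ` topspace X \<subseteq> topspace (quotient_topology X f)"
    by (rule openin_subset)
  show "topspace (quotient_topology X f) \<subseteq> f ` topspace X"
    using openin_topspace[of "quotient_topology X f"] unfolding openin_quotient_topology by (rule conjunct1)
qed

lemma quotient_map_quotient_topology:
  "quotient_map X (quotient_topology X f) f"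
  unfolding quotient_map_def topspace_quotient_topology
  by (auto simp: openin_quotient_topology)

lemma continuous_map_quotient_topology:
  "continuous_map X (quotient_topology X f) f"
  by (rule quotient_imp_continuous_map[OF quotient_map_quotient_topology])

definition rp :: "real^3 \<Rightarrow> (real^3) set" where
  "rp x = {x, -x}"

lemma rp_eq_iff: "rp x = rp y \<longleftrightarrow> x = y \<or> x = - y"
  unfolding rp_def by (auto simp: doubleton_eq_iff)

lemma rp_neg [simp]: "rp (- x) = rp x"
  unfolding rp_def by auto

lemma RP2_alt: "RP2 = quotient_topology (top_of_set (sphere 0 1)) rp"
  unfolding RP2_def rp_def by simp

lemma topspace_RP2: "topspace RP2 = rp ` sphere 0 1"
  by (simp add: RP2_alt topspace_quotient_topology)

lemma continuous_map_rp: "continuous_map (top_of_set (sphere 0 1)) RP2 rp"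
  unfolding RP2_alt by (rule continuous_map_quotient_topology)

lemma open_map_rp: "open_map (top_of_set (sphere 0 1)) RP2 rp"
  unfolding open_map_def
proof (intro allI impI)
  fix U assume U: "openin (top_of_set (sphere (0::real^3) 1)) U"
  then obtain W where O: "open W" "U = sphere 0 1 \<inter> W"
    by (auto simp: openin_open)
  have "{x \<in> sphere 0 1. rp x \<in> rp ` U} = sphere 0 1 \<inter> (W \<union> uminus ` W)"
  proof (intro equalityI subsetI)
    fix x assume "x \<in> {x \<in> sphere 0 1. rp x \<in> rp ` U}"
    then obtain u where u: "x \<in> sphere 0 1" "u \<in> U" "rp x = rp u" by auto
    then have "x = u \<or> x = - u" by (simp add: rp_eq_iff)
    then show "x \<in> sphere 0 1 \<inter> (W \<union> uminus ` W)"
    proof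
      assume "x = - u" then have "x = - u" "u \<in> W" using u O by auto
      then show ?thesis using u(1) by blast
    qed (use u O in auto)
  next
    fix x assume x: "x \<in> sphere 0 1 \<inter> (W \<union> uminus ` W)"
    show "x \<in> {x \<in> sphere 0 1. rp x \<in> rp ` U}"
    proof (cases "x \<in> W")
      case True then show ?thesis using x O by auto
    next
      case False
      then obtain w where w: "w \<in> W" "x = - w" using x by auto
      then have "w \<in> U" using x O by auto
      then show ?thesis using x w by (auto simp: image_iff)
    qed
  qed
  moreover have "open (W \<union> uminus ` W)"
    using O by (simp add: open_negations open_Un)
  ultimately have "openin (top_of_set (sphere 0 1)) {x \<in> sphere 0 1. rp x \<in> rp ` U}"
    by (auto simp: openin_open)
  then show "openin RP2 (rp ` U)"
    unfolding RP2_alt openin_quotient_topology using U openin_subset by fastforce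
qed

lemma open_map_product_same:
  assumes om: "open_map X Y f" and sur: "f ` topspace X = topspace Y"
  shows "open_map (product_topology (\<lambda>_. X) I) (product_topology (\<lambda>_. Y) I)
           (\<lambda>x. restrict (\<lambda>i. f (x i)) I)"
  unfolding open_map_def
proof (intro allI impI)
  fix S assume S: "openin (product_topology (\<lambda>_. X) I) S"
  let ?F = "\<lambda>x. restrict (\<lambda>i. f (x i)) I"
  show "openin (product_topology (\<lambda>_. Y) I) (?F ` S)"
    unfolding openin_product_topology_alt
  proof
    fix y assume "y \<in> ?F ` S"
    then obtain x where x: "x \<in> S" "y = ?F x" by auto
    from S x obtain U where U: "finite {i \<in> I. U i \<noteq> topspace X}" "\<forall>i\<in>I. openin X (U i)"
       "x \<in> Pi\<^sub>E I U" "Pi\<^sub>E I U \<subseteq> S"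
      unfolding openin_product_topology_alt by blast
    define V where "V i = f ` U i" for i
    have "{i \<in> I. V i \<noteq> topspace Y} \<subseteq> {i \<in> I. U i \<noteq> topspace X}"
      using sur by (auto simp: V_def)
    then have "finite {i \<in> I. V i \<noteq> topspace Y}" using U(1) finite_subset by blast
    moreover have "\<forall>i\<in>I. openin Y (V i)" using U(2) om by (auto simp: V_def open_map_def)
    moreover have "y \<in> Pi\<^sub>E I V" using x U(3) by (auto simp: V_def PiE_def Pi_def)
    moreover have "Pi\<^sub>E I V \<subseteq> ?F ` S"
    proof
      fix z assume z: "z \<in> Pi\<^sub>E I V"
      define x' where "x' = restrict (\<lambda>i. SOME u. u \<in> U i \<and> f u = z i) I"
      have "\<forall>i\<in>I. \<exists>u. u \<in> U i \<and> f u = z i"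
      proof
        fix i assume "i \<in> I"
        then have "z i \<in> V i" using z by (simp add: PiE_mem)
        then show "\<exists>u. u \<in> U i \<and> f u = z i" by (auto simp: V_def)
      qed
      then have h: "\<forall>i\<in>I. x' i \<in> U i \<and> f (x' i) = z i"
      proof (intro ballI)
        fix i assume "\<forall>i\<in>I. \<exists>u. u \<in> U i \<and> f u = z i" "i \<in> I"
        then obtain u where "u \<in> U i \<and> f u = z i" by blast
        then show "x' i \<in> U i \<and> f (x' i) = z i"
          unfolding x'_def using \<open>i \<in> I\<close> someI[of "\<lambda>u. u \<in> U i \<and> f u = z i" u] by simp
      qed
      then have "x' \<in> Pi\<^sub>E I U" by (auto simp: x'_def)
      then have "x' \<in> S" using U(4) by blast
      moreover have "?F x' = z" using h z by (auto simp: PiE_def extensional_def)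
      ultimately show "z \<in> ?F ` S" by blast
    qed
    ultimately show "\<exists>V. finite {i \<in> I. V i \<noteq> topspace Y} \<and> (\<forall>i\<in>I. openin Y (V i)) \<and>
           y \<in> Pi\<^sub>E I V \<and> Pi\<^sub>E I V \<subseteq> ?F ` S" by blast
  qed
qed

lemma continuous_map_inner [continuous_intros]:
  fixes f g :: "'a \<Rightarrow> 'b::real_inner"
  shows "continuous_map X euclidean f \<Longrightarrow> continuous_map X euclidean g \<Longrightarrow>
    continuous_map X euclideanreal (\<lambda>x. f x \<bullet> g x)"
  by (simp add: continuous_map_atin tendsto_inner)

lemma continuous_map_scaleR [continuous_intros]:
  fixes g :: "'a \<Rightarrow> 'b::real_normed_vector"
  shows "continuous_map X euclideanreal f \<Longrightarrow> continuous_map X euclidean g \<Longrightarrow>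
    continuous_map X euclidean (\<lambda>x. f x *\<^sub>R g x)"
  by (simp add: continuous_map_atin tendsto_scaleR)



definition ww :: "real^3 \<Rightarrow> real^3 \<Rightarrow> real^3" where
  "ww x y = y - (x \<bullet> y) *\<^sub>R x"

definition tt :: "nat \<Rightarrow> real \<Rightarrow> real^3 \<Rightarrow> real^3 \<Rightarrow> nat \<Rightarrow> real" where
  "tt L e x y l = e * (real l + (1 - x \<bullet> y) / 2) / real L"

definition newpt :: "nat \<Rightarrow> real \<Rightarrow> real^3 \<Rightarrow> real^3 \<Rightarrow> nat \<Rightarrow> real^3" where
  "newpt L e x y l = (1 / sqrt (1 + (tt L e x y l)\<^sup>2)) *\<^sub>R
       (x + (tt L e x y l / norm (ww x y)) *\<^sub>R ww x y)"

lemma unit_abs_inner_lt: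
  fixes x y :: "real^3"
  assumes "norm x = 1" "norm y = 1" "x \<noteq> y" "x \<noteq> - y"
  shows "\<bar>x \<bullet> y\<bar> < 1"
proof -
  have "\<bar>x \<bullet> y\<bar> \<le> norm x * norm y" by (rule Cauchy_Schwarz_ineq2)
  moreover have "\<bar>x \<bullet> y\<bar> \<noteq> norm x * norm y"
    using assms by (subst norm_cauchy_schwarz_abs_eq) auto
  ultimately show ?thesis using assms by simp
qed

lemma inner_ww: "norm x = 1 \<Longrightarrow> x \<bullet> ww x y = 0"
  unfolding ww_def by (simp add: inner_diff_right power2_norm_eq_inner[symmetric])

lemma norm_ww_sq: "norm x = 1 \<Longrightarrow> norm y = 1 \<Longrightarrow> (norm (ww x y))\<^sup>2 = 1 - (x \<bullet> y)\<^sup>2"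
proof -
  assume a: "norm x = 1" "norm y = 1"
  have xx: "x \<bullet> x = 1" using a by (simp add: power2_norm_eq_inner[symmetric])
  have yy: "y \<bullet> y = 1" using a by (simp add: power2_norm_eq_inner[symmetric])
  show ?thesis
    unfolding ww_def power2_norm_eq_inner
    by (simp only: inner_diff_left inner_diff_right inner_scaleR_left inner_scaleR_right xx yy
        inner_commute[of y x]) (simp add: power2_eq_square algebra_simps)
qed

lemma norm_ww_pos:
  "norm x = 1 \<Longrightarrow> norm y = 1 \<Longrightarrow> \<bar>x \<bullet> y\<bar> < 1 \<Longrightarrow> norm (ww x y) > 0"
proof -
  assume a: "norm x = 1" "norm y = 1" "\<bar>x \<bullet> y\<bar> < 1"
  then have "(x \<bullet> y)\<^sup>2 < 1" by (simp add: abs_square_less_1)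
  then have "(norm (ww x y))\<^sup>2 > 0" using norm_ww_sq[OF a(1,2)] by simp
  then show ?thesis by (simp add: zero_less_norm_iff) 
qed

lemma tt_bounds:
  assumes "\<bar>x \<bullet> y\<bar> < 1" "e > 0" "l < L"
  shows "0 < tt L e x y l" "tt L e x y l < e"
proof -
  have L: "real L > 0" using assms by simp
  have h: "0 < (1 - x \<bullet> y) / 2" "(1 - x \<bullet> y) / 2 < 1" using assms(1) by auto
  have "real l + 1 \<le> real L" using assms(3) by (simp add: Suc_leI flip: of_nat_Suc)
  then have "real l + (1 - x \<bullet> y) / 2 < real L" using h by linarith
  then show "tt L e x y l < e"
    unfolding tt_def using L assms(2) by (simp add: divide_less_eq)
  show "0 < tt L e x y l"
  proof -
    have "0 < real l + (1 - x \<bullet> y) / 2" using h(1) of_nat_0_le_iff[of l] by linarith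
    then show ?thesis unfolding tt_def using L assms(2) by simp
  qed
qed

lemma newpt_props:
  fixes x y :: "real^3"
  assumes x: "norm x = 1" and y: "norm y = 1" and xy: "\<bar>x \<bullet> y\<bar> < 1"
    and t: "tt L e x y l > 0"
  shows "x \<bullet> newpt L e x y l = 1 / sqrt (1 + (tt L e x y l)\<^sup>2)"
    and "norm (newpt L e x y l) = 1"
    and "norm (newpt L e x y l - x) \<le> tt L e x y l"
proof -
  define t where "t = tt L e x y l"
  define w where "w = ww x y"
  define s where "s = sqrt (1 + t\<^sup>2)"
  define u where "u = (1 / norm w) *\<^sub>R w"
  have wpos: "norm w > 0" using norm_ww_pos[OF x y xy] w_def by simp
  have xu: "x \<bullet> u = 0" using inner_ww[OF x] by (simp add: u_def w_def)
  have nu: "norm u = 1" using wpos by (simp add: u_def)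
  have s1: "s \<ge> 1" unfolding s_def by simp
  have ss: "s\<^sup>2 = 1 + t\<^sup>2" unfolding s_def by (simp add: add_nonneg_nonneg)
  have np: "newpt L e x y l = (1 / s) *\<^sub>R (x + t *\<^sub>R u)"
    unfolding newpt_def t_def[symmetric] s_def[symmetric] w_def[symmetric] u_def by simp
  have xx: "x \<bullet> x = 1" using x by (simp add: power2_norm_eq_inner[symmetric])
  have uu: "u \<bullet> u = 1" using nu by (simp add: power2_norm_eq_inner[symmetric])
  have ux: "u \<bullet> x = 0" using xu by (simp add: inner_commute)
  show 1: "x \<bullet> newpt L e x y l = 1 / sqrt (1 + (tt L e x y l)\<^sup>2)"
    unfolding np by (simp add: inner_add_right xx xu s_def t_def)
  have "(norm (x + t *\<^sub>R u))\<^sup>2 = 1 + t\<^sup>2"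
    unfolding power2_norm_eq_inner
    by (simp add: inner_add_left inner_add_right xx uu xu ux power2_eq_square)
  then have "norm (x + t *\<^sub>R u) = s" unfolding s_def
    by (metis norm_ge_zero real_sqrt_unique)
  then show 2: "norm (newpt L e x y l) = 1" unfolding np using s1 by simp
  have "(norm (newpt L e x y l - x))\<^sup>2 = 2 - 2 / s"
  proof -
    have aa: "newpt L e x y l \<bullet> newpt L e x y l = 1" using 2 by (simp add: power2_norm_eq_inner[symmetric])
    have "(norm (newpt L e x y l - x))\<^sup>2 = newpt L e x y l \<bullet> newpt L e x y l - 2 * (x \<bullet> newpt L e x y l) + x \<bullet> x"
      unfolding power2_norm_eq_inner
      by (simp only: inner_diff_left inner_diff_right inner_commute[of "newpt L e x y l" x])
    then show ?thesis using aa xx 1 by (simp add: s_def t_def)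
  qed
  also have "\<dots> \<le> t\<^sup>2"
  proof -
    have "2 \<le> s * (s + 1)" using s1 mult_mono[of 1 s 2 "s+1"] by simp
    then have "2 * (s - 1) \<le> s * (s + 1) * (s - 1)" using s1 by (intro mult_right_mono) auto
    then have "2 * (s - 1) \<le> s * (s - 1) * (s + 1)" by (simp add: algebra_simps)
    then have "2 * s - 2 \<le> s * (s\<^sup>2 - 1)" by (simp add: algebra_simps power2_eq_square)
    then have "2 * s - 2 \<le> s * t\<^sup>2" using ss by simp
    then show ?thesis using s1 by (simp add: field_simps)
  qed
  finally show "norm (newpt L e x y l - x) \<le> tt L e x y l"
    using t unfolding t_def by (metis abs_of_pos real_le_rsqrt real_sqrt_abs)
qed



lemma ww_neg1: "ww (- x) y = ww x y" unfolding ww_def by simp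
lemma ww_neg2: "ww x (- y) = - ww x y" unfolding ww_def by (simp add: algebra_simps)
lemma tt_neg: "tt L e (- x) y l = tt L e x (- y) l" unfolding tt_def by simp

lemma newpt_neg: "newpt L e (- x) y l = - newpt L e x (- y) l"
  unfolding newpt_def ww_neg1 ww_neg2 tt_neg norm_minus_cancel
  by (simp add: algebra_simps)

lemma newpt_inj:
  fixes x y y' :: "real^3"
  assumes x: "norm x = 1" and y: "norm y = 1" and y': "norm y' = 1"
    and xy: "\<bar>x \<bullet> y\<bar> < 1" and xy': "\<bar>x \<bullet> y'\<bar> < 1" and e: "e > 0"
    and l: "l < L" and l': "l' < L"
    and eq: "newpt L e x y l = newpt L e x y' l'"
  shows "l = l' \<and> y = y'"
proof -
  define t where "t = tt L e x y l"
  define t' where "t' = tt L e x y' l'"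
  have tp: "t > 0" using tt_bounds[OF xy e l] t_def by simp
  have tp': "t' > 0" using tt_bounds[OF xy' e l'] t'_def by simp
  have "1 / sqrt (1 + t\<^sup>2) = 1 / sqrt (1 + t'\<^sup>2)"
    using newpt_props(1)[OF x y xy, of L e l] newpt_props(1)[OF x y' xy', of L e l'] eq tp tp'
    by (simp add: t_def t'_def)
  then have "sqrt (1 + t\<^sup>2) = sqrt (1 + t'\<^sup>2)"
    by (metis inverse_eq_iff_eq inverse_eq_divide)
  then have "t\<^sup>2 = t'\<^sup>2" by simp
  then have tt': "t = t'" using tp tp' by (simp add: power2_eq_iff)
  have L: "real L > 0" using l by simp
  define a where "a = (1 - x \<bullet> y) / 2"
  define a' where "a' = (1 - x \<bullet> y') / 2"
  have a: "0 < a" "a < 1" "0 < a'" "a' < 1" using xy xy' by (auto simp: a_def a'_def)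
  have "e * (real l + a) / real L = e * (real l' + a') / real L"
    using tt' by (simp add: t_def t'_def tt_def a_def a'_def)
  then have la: "real l + a = real l' + a'" using e L by (simp add: divide_eq_eq)
  have ll: "l = l'"
  proof (rule ccontr)
    assume "l \<noteq> l'"
    then have "l < l' \<or> l' < l" by auto
    then show False
    proof
      assume "l < l'" then have "real l + 1 \<le> real l'" by (simp add: Suc_leI flip: of_nat_Suc)
      then show False using la a by linarith
    next
      assume "l' < l" then have "real l' + 1 \<le> real l" by (simp add: Suc_leI flip: of_nat_Suc)
      then show False using la a by linarith
    qed
  qed
  then have "a = a'" using la by simp
  then have c: "x \<bullet> y = x \<bullet> y'" by (simp add: a_def a'_def)
  have nw: "norm (ww x y) = norm (ww x y')"
    using norm_ww_sq[OF x y] norm_ww_sq[OF x y'] c by (metis norm_ge_zero power2_eq_iff_nonneg)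
  have wpos: "norm (ww x y) > 0" using norm_ww_pos[OF x y xy] .
  have s0: "1 / sqrt (1 + t\<^sup>2) \<noteq> 0" using add_pos_nonneg[OF zero_less_one zero_le_power2[of t]] by simp
  have "(1 / sqrt (1 + t\<^sup>2)) *\<^sub>R (x + (t / norm (ww x y)) *\<^sub>R ww x y)
      = (1 / sqrt (1 + t\<^sup>2)) *\<^sub>R (x + (t / norm (ww x y)) *\<^sub>R ww x y')"
    using eq unfolding newpt_def t_def[symmetric] t'_def[symmetric] tt'[symmetric] nw[symmetric] .
  then have "x + (t / norm (ww x y)) *\<^sub>R ww x y = x + (t / norm (ww x y)) *\<^sub>R ww x y'"
    using s0 by (simp only: scaleR_cancel_left) simp
  then have "ww x y = ww x y'" using tp wpos by simp
  then have "y = y'" unfolding ww_def c by simp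
  with ll show ?thesis by simp
qed



definition offd :: "nat \<Rightarrow> (nat \<times> nat) set" where
  "offd n = {(i, j). i < n \<and> j < n \<and> i \<noteq> j}"

definition dd :: "real^3 \<Rightarrow> real^3 \<Rightarrow> real" where
  "dd x y = min (norm (x - y)) (norm (x + y))"

definition epsv :: "nat \<Rightarrow> (nat \<Rightarrow> real^3) \<Rightarrow> real" where
  "epsv n v = (\<Prod>(i, j)\<in>offd n. dd (v i) (v j)) / (4 * 2 ^ card (offd n))"

definition Lft :: "nat \<Rightarrow> (nat \<Rightarrow> real^3) set" where
  "Lft n = {v \<in> PiE {..<n} (\<lambda>_. sphere 0 1). inj_on (\<lambda>i. rp (v i)) {..<n}}"

definition sg :: "bool \<Rightarrow> real^3 \<Rightarrow> real^3" where
  "sg b y = (if b then y else - y)"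

definition Idx :: "nat \<Rightarrow> nat \<Rightarrow> ((nat \<times> nat) \<times> bool \<times> nat) set" where
  "Idx n L = offd n \<times> (UNIV :: bool set) \<times> {..<L}"

definition np :: "nat \<Rightarrow> nat \<Rightarrow> (nat \<Rightarrow> real^3) \<Rightarrow> (nat \<times> nat) \<times> bool \<times> nat \<Rightarrow> real^3" where
  "np n L v idx = (case idx of ((i, j), b, l) \<Rightarrow> newpt L (epsv n v) (v i) (sg b (v j)) l)"

lemma finite_offd: "finite (offd n)"
  by (rule finite_subset[of _ "{..<n} \<times> {..<n}"]) (auto simp: offd_def)

lemma dd_le1: "dd x y \<le> norm (x - y)" by (simp add: dd_def)
lemma dd_le2: "dd x y \<le> norm (x + y)" by (simp add: dd_def)
lemma dd_neg1: "dd (- x) y = dd x y"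
proof -
  have 1: "- x - y = - (x + y)" by simp
  have 2: "- x + y = - (x - y)" by simp
  show ?thesis unfolding dd_def 1 2 norm_minus_cancel by (rule min.commute)
qed
lemma dd_neg2: "dd x (- y) = dd x y"
  unfolding dd_def by (simp add: min.commute)
lemma dd_le_2: "norm x = 1 \<Longrightarrow> norm y = 1 \<Longrightarrow> dd x y \<le> 2"
  using dd_le1[of x y] norm_triangle_ineq4[of x y] by simp
lemma dd_pos: "x \<noteq> y \<Longrightarrow> x \<noteq> - y \<Longrightarrow> dd x y > 0"
  unfolding dd_def by (auto simp: add_eq_0_iff2)

lemma sg_cases: "sg b y = y \<or> sg b y = - y" by (simp add: sg_def)
lemma norm_sg [simp]: "norm (sg b y) = norm y" by (simp add: sg_def)
lemma abs_inner_sg [simp]: "\<bar>x \<bullet> sg b y\<bar> = \<bar>x \<bullet> y\<bar>" by (simp add: sg_def)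

lemma Lft_facts:
  assumes v: "v \<in> Lft n"
  shows "\<And>i. i < n \<Longrightarrow> norm (v i) = 1"
    and "\<And>i j. i < n \<Longrightarrow> j < n \<Longrightarrow> i \<noteq> j \<Longrightarrow> v i \<noteq> v j \<and> v i \<noteq> - v j"
    and "\<And>i j. i < n \<Longrightarrow> j < n \<Longrightarrow> i \<noteq> j \<Longrightarrow> \<bar>v i \<bullet> v j\<bar> < 1"
proof -
  show n1: "\<And>i. i < n \<Longrightarrow> norm (v i) = 1" using v by (auto simp: Lft_def PiE_def Pi_def)
  show d: "\<And>i j. i < n \<Longrightarrow> j < n \<Longrightarrow> i \<noteq> j \<Longrightarrow> v i \<noteq> v j \<and> v i \<noteq> - v j"
  proof -
    fix i j assume ij: "i < n" "j < n" "i \<noteq> j"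
    then have "rp (v i) \<noteq> rp (v j)" using v unfolding Lft_def inj_on_def by auto
    then show "v i \<noteq> v j \<and> v i \<noteq> - v j" by (auto simp: rp_eq_iff)
  qed
  show "\<And>i j. i < n \<Longrightarrow> j < n \<Longrightarrow> i \<noteq> j \<Longrightarrow> \<bar>v i \<bullet> v j\<bar> < 1"
    using n1 d unit_abs_inner_lt by blast
qed

lemma epsv_facts:
  assumes v: "v \<in> Lft n"
  shows "epsv n v > 0"
    and "\<And>i j. (i, j) \<in> offd n \<Longrightarrow> 4 * epsv n v \<le> dd (v i) (v j)"
    and "epsv n v \<le> 1 / 2"
proof -
  have ddpos: "\<And>i j. (i, j) \<in> offd n \<Longrightarrow> dd (v i) (v j) > 0"
    using Lft_facts(2)[OF v] dd_pos by (auto simp: offd_def)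
  have dd2: "\<And>i j. (i, j) \<in> offd n \<Longrightarrow> dd (v i) (v j) \<le> 2"
    using Lft_facts(1)[OF v] dd_le_2 by (auto simp: offd_def)
  have P: "(\<Prod>(i, j)\<in>offd n. dd (v i) (v j)) > 0"
    by (rule prod_pos) (use ddpos in auto)
  then show "epsv n v > 0" unfolding epsv_def by simp
  show le: "\<And>i j. (i, j) \<in> offd n \<Longrightarrow> 4 * epsv n v \<le> dd (v i) (v j)"
  proof -
    fix i j assume ij: "(i, j) \<in> offd n"
    let ?f = "\<lambda>(i, j). dd (v i) (v j)"
    have "prod ?f (offd n) = dd (v i) (v j) * prod ?f (offd n - {(i, j)})"
      using ij finite_offd by (simp add: prod.remove)
    also have "\<dots> \<le> dd (v i) (v j) * 2 ^ card (offd n)"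
    proof (rule mult_left_mono)
      show "prod ?f (offd n - {(i, j)}) \<le> 2 ^ card (offd n)"
        by (rule prod_le_power) (use ddpos dd2 finite_offd in
            \<open>auto simp: less_imp_le card_Diff_subset intro: card_mono\<close>)
      show "0 \<le> dd (v i) (v j)" using ddpos[OF ij] by simp
    qed
    finally show "4 * epsv n v \<le> dd (v i) (v j)"
      unfolding epsv_def by (simp add: field_simps)
  qed
  show "epsv n v \<le> 1 / 2"
  proof (cases "offd n = {}")
    case True then show ?thesis by (simp add: epsv_def)
  next
    case False
    then obtain i j where ij: "(i, j) \<in> offd n" by auto
    show ?thesis using le[OF ij] dd2[OF ij] by simp
  qed
qed

lemma np_props:
  assumes v: "v \<in> Lft n" and idx: "((i, j), b, l) \<in> Idx n L"
  shows "norm (np n L v ((i, j), b, l)) = 1"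
    and "norm (np n L v ((i, j), b, l) - v i) < epsv n v"
    and "v i \<bullet> np n L v ((i, j), b, l) = 1 / sqrt (1 + (tt L (epsv n v) (v i) (sg b (v j)) l)\<^sup>2)"
    and "tt L (epsv n v) (v i) (sg b (v j)) l > 0"
    and "i < n" "j < n" "i \<noteq> j" "l < L"
proof -
  show ijl: "i < n" "j < n" "i \<noteq> j" "l < L" using idx by (auto simp: Idx_def offd_def)
  have x: "norm (v i) = 1" and y: "norm (sg b (v j)) = 1" using Lft_facts(1)[OF v] ijl by auto
  have xy: "\<bar>v i \<bullet> sg b (v j)\<bar> < 1" using Lft_facts(3)[OF v] ijl by simp
  have e: "epsv n v > 0" using epsv_facts(1)[OF v] .
  note tb = tt_bounds[OF xy e ijl(4)]
  show "tt L (epsv n v) (v i) (sg b (v j)) l > 0" using tb(1) .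
  note p = newpt_props[OF x y xy tb(1)]
  show "norm (np n L v ((i, j), b, l)) = 1" using p(2) by (simp add: np_def)
  show "v i \<bullet> np n L v ((i, j), b, l) = 1 / sqrt (1 + (tt L (epsv n v) (v i) (sg b (v j)) l)\<^sup>2)"
    using p(1) by (simp add: np_def)
  show "norm (np n L v ((i, j), b, l) - v i) < epsv n v"
    using p(3) tb(2) by (simp add: np_def)
qed



lemma close_lemma:
  fixes X Z a b :: "real^3"
  assumes "norm (X - a) < e" "norm (Z - b) < e"
  shows "X = Z \<Longrightarrow> norm (a - b) < 2 * e" and "X = - Z \<Longrightarrow> norm (a + b) < 2 * e"
proof -
  assume "X = Z"
  then have "a - b = - (X - a) + (Z - b)" by simp
  then have "norm (a - b) \<le> norm (X - a) + norm (Z - b)"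
    by (metis norm_minus_cancel norm_triangle_ineq)
  then show "norm (a - b) < 2 * e" using assms by simp
next
  assume "X = - Z"
  then have "a + b = - (X - a) - (Z - b)" by simp
  then have "norm (a + b) \<le> norm (X - a) + norm (Z - b)"
    by (metis norm_minus_cancel norm_triangle_ineq4)
  then show "norm (a + b) < 2 * e" using assms by simp
qed

lemma np_not_orig:
  assumes v: "v \<in> Lft n" and idx: "idx \<in> Idx n L" and k: "k < n"
  shows "rp (np n L v idx) \<noteq> rp (v k)"
proof
  assume eq: "rp (np n L v idx) = rp (v k)"
  obtain i j b l where idx_eq: "idx = ((i, j), b, l)" by (metis prod.collapse)
  note P = np_props[OF v idx[unfolded idx_eq]]
  let ?X = "np n L v ((i, j), b, l)"
  let ?e = "epsv n v"
  have e: "?e > 0" by (rule epsv_facts(1)[OF v])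
  have XX: "?X = v k \<or> ?X = - v k" using eq by (simp add: rp_eq_iff idx_eq)
  show False
  proof (cases "k = i")
    case True
    define t where "t = tt L (epsv n v) (v i) (sg b (v j)) l"
    have t: "t > 0" using P(4) by (simp add: t_def)
    have "t\<^sup>2 > 0" using t by simp
    then have "1 < 1 + t\<^sup>2" by simp
    then have s: "sqrt (1 + t\<^sup>2) > 1" by (metis real_sqrt_one real_sqrt_less_iff)
    have ii: "v i \<bullet> v i = 1" using Lft_facts(1)[OF v P(5)] by (simp add: power2_norm_eq_inner[symmetric])
    define r where "r = 1 / sqrt (1 + t\<^sup>2)"
    have a: "v i \<bullet> ?X = r" using P(3) by (simp add: t_def r_def)
    have r0: "0 < r" unfolding r_def using s by (intro divide_pos_pos) linarith+
    have r1: "r < 1" unfolding r_def using s by (metis divide_less_eq_1_pos less_trans zero_less_one)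
    from XX show False
    proof
      assume "?X = v k" then have "r = 1" using a ii True by simp
      then show False using r1 by simp
    next
      assume "?X = - v k" then have "r = - 1" using a ii True by simp
      then show False using r0 by simp
    qed
  next
    case False
    then have off: "(i, k) \<in> offd n" using P(5) k by (auto simp: offd_def)
    have D: "4 * ?e \<le> dd (v i) (v k)" using epsv_facts(2)[OF v off] .
    from XX show False
    proof
      assume "?X = v k"
      then have "norm (v i - v k) < ?e" using P(2) by (simp add: norm_minus_commute)
      then show False using D dd_le1[of "v i" "v k"] e by linarith
    next
      assume "?X = - v k"
      then have "norm (v i + v k) < ?e" using P(2)
        by (metis add.commute minus_add_distrib norm_minus_cancel diff_conv_add_uminus)
      then show False using D dd_le2[of "v i" "v k"] e by linarith
    qed
  qed
qed

lemma np_inj: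
  assumes v: "v \<in> Lft n" and idx: "idx \<in> Idx n L" and idx': "idx' \<in> Idx n L"
    and eq: "rp (np n L v idx) = rp (np n L v idx')"
  shows "idx = idx'"
proof -
  obtain i j b l where idx_eq: "idx = ((i, j), b, l)" by (metis prod.collapse)
  obtain i' j' b' l' where idx'_eq: "idx' = ((i', j'), b', l')" by (metis prod.collapse)
  note P = np_props[OF v idx[unfolded idx_eq]]
  note P' = np_props[OF v idx'[unfolded idx'_eq]]
  let ?X = "np n L v ((i, j), b, l)"
  let ?Z = "np n L v ((i', j'), b', l')"
  let ?e = "epsv n v"
  have e: "?e > 0" by (rule epsv_facts(1)[OF v])
  have ehalf: "?e \<le> 1/2" by (rule epsv_facts(3)[OF v])
  have XZ: "?X = ?Z \<or> ?X = - ?Z" using eq by (simp add: rp_eq_iff idx_eq idx'_eq)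
  note C = close_lemma[OF P(2) P'(2)]
  show ?thesis
  proof (cases "i = i'")
    case False
    then have off: "(i, i') \<in> offd n" using P(5) P'(5) by (auto simp: offd_def)
    have D: "4 * ?e \<le> dd (v i) (v i')" using epsv_facts(2)[OF v off] .
    from XZ show ?thesis
    proof
      assume "?X = ?Z"
      then have "norm (v i - v i') < 2 * ?e" by (rule C(1))
      then show ?thesis using D dd_le1[of "v i" "v i'"] e by linarith
    next
      assume "?X = - ?Z"
      then have "norm (v i + v i') < 2 * ?e" by (rule C(2))
      then show ?thesis using D dd_le2[of "v i" "v i'"] e by linarith
    qed
  next
    case True
    from XZ show ?thesis
    proof
      assume "?X = - ?Z"
      then have "norm (v i + v i') < 2 * ?e" by (rule C(2))
      moreover have "norm (v i + v i') = 2" using True Lft_facts(1)[OF v P(5)]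
        by (metis mult_2 norm_scaleR real_norm_def scaleR_2 abs_of_nonneg zero_le_numeral mult.right_neutral)
      ultimately show ?thesis using ehalf by linarith
    next
      assume XZ': "?X = ?Z"
      have x: "norm (v i) = 1" using Lft_facts(1)[OF v P(5)] .
      have y: "norm (sg b (v j)) = 1" using Lft_facts(1)[OF v P(6)] by simp
      have y': "norm (sg b' (v j')) = 1" using Lft_facts(1)[OF v P'(6)] by simp
      have xy: "\<bar>v i \<bullet> sg b (v j)\<bar> < 1" using Lft_facts(3)[OF v P(5) P(6) P(7)] by simp
      have xy': "\<bar>v i \<bullet> sg b' (v j')\<bar> < 1" using Lft_facts(3)[OF v P'(5) P'(6) P'(7)] True by simp
      have "newpt L ?e (v i) (sg b (v j)) l = newpt L ?e (v i) (sg b' (v j')) l'"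
        using XZ' True by (simp add: np_def)
      from newpt_inj[OF x y y' xy xy' e P(8) P'(8) this]
      have ll: "l = l'" and yy: "sg b (v j) = sg b' (v j')" by auto
      have jj: "j = j'"
      proof (rule ccontr)
        assume "j \<noteq> j'"
        then have "v j \<noteq> v j' \<and> v j \<noteq> - v j'" using Lft_facts(2)[OF v P(6) P'(6)] by simp
        then show False using yy by (auto simp: sg_def minus_equation_iff split: if_splits)
      qed
      have "v j \<noteq> - v j"
      proof
        assume h: "v j = - v j"
        have "v j + v j = 0" by (subst (2) h) simp
        then have "(2::real) *\<^sub>R v j = 0" by (simp add: scaleR_2)
        then have "v j = 0" by simp
        then show False using Lft_facts(1)[OF v P(6)] by simp
      qed
      then have bb: "b = b'" using yy jj by (auto simp: sg_def split: if_splits)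
      show ?thesis using True jj bb ll idx_eq idx'_eq by simp
    qed
  qed
qed



definition rep :: "'a set \<Rightarrow> 'a" where "rep a = (SOME x. x \<in> a)"
definition Dset :: "(real^3) set \<Rightarrow> (real^3) set \<Rightarrow> real" where "Dset a b = dd (rep a) (rep b)"
definition offP :: "'a set \<Rightarrow> ('a \<times> 'a) set" where "offP P = {(a, b). a \<in> P \<and> b \<in> P \<and> a \<noteq> b}"
definition epsP :: "(real^3) set set \<Rightarrow> real" where
  "epsP P = (\<Prod>(a, b)\<in>offP P. Dset a b) / (4 * 2 ^ card (offP P))"
definition Newset :: "nat \<Rightarrow> (real^3) set set \<Rightarrow> (real^3) set set" where
  "Newset L P = {rp (newpt L (epsP P) x y l) | x y l. (\<exists>a\<in>P. \<exists>b\<in>P. a \<noteq> b \<and> x \<in> a \<and> y \<in> b) \<and> l < L}"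

lemma rep_rp: "rep (rp x) = x \<or> rep (rp x) = - x"
proof -
  have "x \<in> rp x" by (simp add: rp_def)
  then have "rep (rp x) \<in> rp x" unfolding rep_def by (rule someI)
  then show ?thesis by (simp add: rp_def)
qed

lemma Dset_rp: "Dset (rp x) (rp y) = dd x y"
  using rep_rp[of x] rep_rp[of y] unfolding Dset_def by (auto simp: dd_neg1 dd_neg2)

lemma epsP_eq:
  assumes v: "v \<in> Lft n"
  shows "epsP ((\<lambda>i. rp (v i)) ` {..<n}) = epsv n v"
proof -
  let ?P = "(\<lambda>i. rp (v i)) ` {..<n}"
  define g where "g = (\<lambda>(i::nat, j::nat). (rp (v i), rp (v j)))"
  have inj: "inj_on (\<lambda>i. rp (v i)) {..<n}" using v by (simp add: Lft_def)
  have img: "offP ?P = g ` offd n"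
    unfolding offP_def g_def offd_def using inj by (auto simp: inj_on_def image_iff)
  have ginj: "inj_on g (offd n)"
    using inj unfolding g_def offd_def inj_on_def by auto
  have "(\<Prod>(a, b)\<in>offP ?P. Dset a b) = (\<Prod>(i, j)\<in>offd n. dd (v i) (v j))"
    unfolding img by (subst prod.reindex[OF ginj]) (auto simp: g_def Dset_rp intro!: prod.cong)
  moreover have "card (offP ?P) = card (offd n)" unfolding img using ginj by (rule card_image)
  ultimately show ?thesis unfolding epsP_def epsv_def by simp
qed

lemma Newset_eq:
  assumes v: "v \<in> Lft n"
  shows "Newset L ((\<lambda>i. rp (v i)) ` {..<n}) = (\<lambda>idx. rp (np n L v idx)) ` Idx n L"
proof -
  let ?P = "(\<lambda>i. rp (v i)) ` {..<n}"
  have E: "epsP ?P = epsv n v" by (rule epsP_eq[OF v])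
  show ?thesis
  proof (intro equalityI subsetI)
    fix z assume "z \<in> Newset L ?P"
    then obtain x y l i j where z: "z = rp (newpt L (epsv n v) x y l)" and l: "l < L"
      and ij: "i < n" "j < n" "rp (v i) \<noteq> rp (v j)" and xy: "x \<in> rp (v i)" "y \<in> rp (v j)"
      unfolding Newset_def E by blast
    have ij': "i \<noteq> j" using ij by auto
    from xy(1) have "x = v i \<or> x = - v i" by (simp add: rp_def)
    then show "z \<in> (\<lambda>idx. rp (np n L v idx)) ` Idx n L"
    proof
      assume x: "x = v i"
      from xy(2) have "y = v j \<or> y = - v j" by (simp add: rp_def)
      then obtain b where "y = sg b (v j)" by (metis sg_def)
      then have "z = rp (np n L v ((i, j), b, l))" using z x by (simp add: np_def)
      moreover have "((i, j), b, l) \<in> Idx n L" using ij ij' l by (simp add: Idx_def offd_def)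
      ultimately show ?thesis by blast
    next
      assume x: "x = - v i"
      from xy(2) have "- y = v j \<or> - y = - v j" by (auto simp: rp_def)
      then obtain b where b: "- y = sg b (v j)" by (metis sg_def)
      have "z = rp (newpt L (epsv n v) (v i) (- y) l)"
        using z x newpt_neg[of L "epsv n v" "v i" y l] by simp
      then have "z = rp (np n L v ((i, j), b, l))" using b by (simp add: np_def)
      moreover have "((i, j), b, l) \<in> Idx n L" using ij ij' l by (simp add: Idx_def offd_def)
      ultimately show ?thesis by blast
    qed
  next
    fix z assume "z \<in> (\<lambda>idx. rp (np n L v idx)) ` Idx n L"
    then obtain i j b l where z: "z = rp (np n L v ((i, j), b, l))" and idx: "((i, j), b, l) \<in> Idx n L"
      by auto
    have ijl: "i < n" "j < n" "i \<noteq> j" "l < L" using idx by (auto simp: Idx_def offd_def)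
    have ne: "rp (v i) \<noteq> rp (v j)" using v ijl unfolding Lft_def inj_on_def by auto
    have "v i \<in> rp (v i)" "sg b (v j) \<in> rp (v j)" by (auto simp: rp_def sg_def)
    moreover have "z = rp (newpt L (epsP ?P) (v i) (sg b (v j)) l)" using z E by (simp add: np_def)
    ultimately show "z \<in> Newset L ?P" unfolding Newset_def using ijl ne by blast
  qed
qed



abbreviation WW :: "nat \<Rightarrow> (nat \<Rightarrow> real^3) topology" where
  "WW n \<equiv> product_topology (\<lambda>_. top_of_set (sphere (0::real^3) 1)) {..<n}"

lemma topspace_WW: "topspace (WW n) = PiE {..<n} (\<lambda>_. sphere 0 1)"
  by simp

lemma Lft_sub: "Lft n \<subseteq> topspace (WW n)"
  by (auto simp: Lft_def)

lemma topspace_A: "topspace (subtopology (WW n) (Lft n)) = Lft n"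
  using Lft_sub by (simp add: topspace_subtopology Int_absorb1)

lemma cont_proj:
  assumes "i < n"
  shows "continuous_map (subtopology (WW n) S) euclidean (\<lambda>v. v i)"
proof -
  have "continuous_map (WW n) (top_of_set (sphere 0 1)) (\<lambda>v. v i)"
    using assms by (intro continuous_map_product_projection) simp
  then have "continuous_map (WW n) euclidean (\<lambda>v. v i)"
    by (rule continuous_map_into_fulltopology)
  then show ?thesis by (rule continuous_map_from_subtopology)
qed

lemma cont_proj_sphere:
  assumes "i < n"
  shows "continuous_map (subtopology (WW n) S) (top_of_set (sphere 0 1)) (\<lambda>v. v i)"
proof -
  have "continuous_map (WW n) (top_of_set (sphere 0 1)) (\<lambda>v. v i)"
    using assms by (intro continuous_map_product_projection) simp
  then show ?thesis by (rule continuous_map_from_subtopology)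
qed

lemma cont_dd:
  "continuous_map X euclidean f \<Longrightarrow> continuous_map X euclidean g \<Longrightarrow>
   continuous_map X euclideanreal (\<lambda>x. dd (f x) (g x))"
  unfolding dd_def
  by (intro continuous_map_real_min continuous_map_norm continuous_map_diff continuous_map_add)

lemma cont_eps: "continuous_map (subtopology (WW n) S) euclideanreal (epsv n)"
proof -
  have 1: "continuous_map (subtopology (WW n) S) euclideanreal
          (\<lambda>v. prod (\<lambda>ij. dd (v (fst ij)) (v (snd ij))) (offd n))"
  proof (rule continuous_map_prod[OF finite_offd])
    fix ij assume "ij \<in> offd n"
    then have "fst ij < n" "snd ij < n" by (auto simp: offd_def)
    then show "continuous_map (subtopology (WW n) S) euclideanreal (\<lambda>v. dd (v (fst ij)) (v (snd ij)))"
      by (intro cont_dd cont_proj)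
  qed
  have 2: "continuous_map (subtopology (WW n) S) euclideanreal
          (\<lambda>v. prod (\<lambda>ij. dd (v (fst ij)) (v (snd ij))) (offd n) * (1 / (4 * 2 ^ card (offd n))))"
    by (rule continuous_map_real_mult_right[OF 1])
  have "epsv n = (\<lambda>v. prod (\<lambda>ij. dd (v (fst ij)) (v (snd ij))) (offd n) * (1 / (4 * 2 ^ card (offd n))))"
    unfolding epsv_def by (auto simp: case_prod_beta')
  then show ?thesis using 2 by simp
qed

lemma cont_np:
  assumes idx: "((i, j), b, l) \<in> Idx n L"
  shows "continuous_map (subtopology (WW n) (Lft n)) euclidean (\<lambda>v. np n L v ((i, j), b, l))"
proof -
  have ijl: "i < n" "j < n" "i \<noteq> j" "l < L" using idx by (auto simp: Idx_def offd_def)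
  let ?A = "subtopology (WW n) (Lft n)"
  have pi: "continuous_map ?A euclidean (\<lambda>v. v i)" by (rule cont_proj[OF ijl(1)])
  have pj: "continuous_map ?A euclidean (\<lambda>v. sg b (v j))"
    using cont_proj[OF ijl(2)] by (cases b) (auto simp: sg_def)
  have ep: "continuous_map ?A euclideanreal (epsv n)" by (rule cont_eps)
  have wpos: "\<And>v. v \<in> topspace ?A \<Longrightarrow> norm (sg b (v j) - (v i \<bullet> sg b (v j)) *\<^sub>R v i) \<noteq> 0"
  proof -
    fix v assume "v \<in> topspace ?A"
    then have v: "v \<in> Lft n" by (simp add: topspace_A)
    have "norm (ww (v i) (sg b (v j))) > 0"
      using Lft_facts[OF v] ijl by (intro norm_ww_pos) auto
    then show "norm (sg b (v j) - (v i \<bullet> sg b (v j)) *\<^sub>R v i) \<noteq> 0" by (simp add: ww_def)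
  qed
  have Lpos: "real L \<noteq> 0" using ijl by simp
  have sq: "\<And>t::real. sqrt (1 + t\<^sup>2) \<noteq> 0"
    by (metis add_pos_nonneg real_sqrt_gt_0_iff zero_le_power2 zero_less_one less_irrefl)
  show ?thesis
    unfolding np_def prod.case newpt_def tt_def ww_def
    using pi pj ep wpos Lpos sq
    by (intro continuous_intros) auto
qed



lemma main_cs:
  assumes L: "L > 0"
  shows "has_cross_section RP2 n (card (Idx n L))"
proof -
  define m where "m = card (Idx n L)"
  have fin: "finite (Idx n L)" unfolding Idx_def using finite_offd by simp
  obtain e where e: "bij_betw e {0..<m} (Idx n L)"
    using ex_bij_betw_nat_finite[OF fin] m_def by blast
  have eI: "\<And>k. k < m \<Longrightarrow> e k \<in> Idx n L" using e bij_betwE by fastforce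
  define A where "A = subtopology (WW n) (Lft n)"
  define Fm where "Fm = (\<lambda>v::nat \<Rightarrow> real^3. restrict (\<lambda>i. rp (v i)) {..<n})"
  define H where "H = (\<lambda>v. restrict (\<lambda>k. if k < n then rp (v k) else rp (np n L v (e (k - n)))) {..<n+m})"
  define s where "s = (\<lambda>P. (P, Newset L P))"
  have tA: "topspace A = Lft n" unfolding A_def by (rule topspace_A)
  have om1: "open_map (WW n) (product_topology (\<lambda>_. RP2) {..<n}) Fm"
    unfolding Fm_def
    by (rule open_map_product_same[OF open_map_rp]) (simp add: topspace_RP2)
  have pre: "{x \<in> topspace (WW n). Fm x \<in> {p. inj_on p {..<n}}} = Lft n"
  proof -
    have "\<And>x. inj_on (Fm x) {..<n} = inj_on (\<lambda>i. rp (x i)) {..<n}"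
      unfolding Fm_def by (rule inj_on_cong) simp
    then show ?thesis unfolding Lft_def by auto
  qed
  have om: "open_map A (conf RP2 n) Fm"
    unfolding A_def conf_def by (rule open_map_restriction[OF om1 pre])
  have cFprod: "continuous_map A (product_topology (\<lambda>_. RP2) {..<n}) Fm"
    unfolding continuous_map_componentwise
  proof (intro conjI ballI)
    show "Fm ` topspace A \<subseteq> extensional {..<n}" by (auto simp: Fm_def)
    fix k assume k: "k \<in> {..<n}"
    have "continuous_map A RP2 (rp \<circ> (\<lambda>v. v k))"
      unfolding A_def using k by (intro continuous_map_compose[OF cont_proj_sphere continuous_map_rp]) auto
    then show "continuous_map A RP2 (\<lambda>x. Fm x k)"
      by (rule continuous_map_eq) (use k in \<open>simp add: Fm_def\<close>)
  qed
  have cF: "continuous_map A (conf RP2 n) Fm"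
    unfolding conf_def continuous_map_in_subtopology
    using cFprod pre tA Lft_sub by (auto simp: Pi_iff)
  have surF: "Fm ` topspace A = topspace (conf RP2 n)"
  proof (intro equalityI subsetI)
    fix p assume "p \<in> Fm ` topspace A"
    then show "p \<in> topspace (conf RP2 n)"
      using cF continuous_map_image_subset_topspace by blast
  next
    fix p assume p: "p \<in> topspace (conf RP2 n)"
    then have p1: "p \<in> PiE {..<n} (\<lambda>_. rp ` sphere 0 1)" and p2: "inj_on p {..<n}"
      by (auto simp: conf_def topspace_RP2)
    define v where "v = restrict (\<lambda>i. SOME x. x \<in> sphere 0 1 \<and> rp x = p i) {..<n}"
    have vi: "\<And>i. i < n \<Longrightarrow> v i \<in> sphere 0 1 \<and> rp (v i) = p i"
    proof -
      fix i assume i: "i < n"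
      then obtain x where "x \<in> sphere 0 1 \<and> rp x = p i" using p1 by (auto simp: PiE_def Pi_def) 
      then show "v i \<in> sphere 0 1 \<and> rp (v i) = p i"
        unfolding v_def using i someI[of "\<lambda>x. x \<in> sphere 0 1 \<and> rp x = p i" x] by simp
    qed
    have "Fm v = p"
    proof
      fix i show "Fm v i = p i"
        using vi p1 by (cases "i < n") (auto simp: Fm_def PiE_def extensional_def)
    qed
    moreover have "v \<in> Lft n"
    proof -
      have "v \<in> PiE {..<n} (\<lambda>_. sphere 0 1)" using vi by (auto simp: v_def)
      moreover have "inj_on (\<lambda>i. rp (v i)) {..<n}"
        using p2 vi by (simp add: inj_on_def)
      ultimately show ?thesis by (simp add: Lft_def)
    qed
    ultimately show "p \<in> Fm ` topspace A" using tA by blast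
  qed
  have qF: "quotient_map A (conf RP2 n) Fm"
    by (rule continuous_open_imp_quotient_map[OF cF om surF])
  have qU: "quotient_map A (uconf RP2 n) ((\<lambda>p. p ` {..<n}) \<circ> Fm)"
    unfolding uconf_def by (rule quotient_map_compose[OF qF quotient_map_quotient_topology])
  have Hinj: "inj_on (H v) {..<n+m}" if v: "v \<in> Lft n" for v
  proof (rule inj_onI)
    fix k1 k2 assume k1: "k1 \<in> {..<n+m}" and k2: "k2 \<in> {..<n+m}" and eq: "H v k1 = H v k2"
    have inj: "inj_on (\<lambda>i. rp (v i)) {..<n}" using v by (simp add: Lft_def)
    show "k1 = k2"
    proof (cases "k1 < n")
      case True
      show ?thesis
      proof (cases "k2 < n")
        case True
        then show ?thesis using \<open>k1 < n\<close> eq k1 k2 inj by (auto simp: H_def inj_on_def)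
      next
        case False
        then have "rp (v k1) = rp (np n L v (e (k2 - n)))" using True eq k1 k2 by (simp add: H_def)
        moreover have "e (k2 - n) \<in> Idx n L" using False k2 eI by simp
        ultimately show ?thesis using np_not_orig[OF v _ True] by metis
      qed
    next
      case False
      show ?thesis
      proof (cases "k2 < n")
        case True
        then have "rp (v k2) = rp (np n L v (e (k1 - n)))" using False eq k1 k2 by (simp add: H_def)
        moreover have "e (k1 - n) \<in> Idx n L" using False k1 eI by simp
        ultimately show ?thesis using np_not_orig[OF v _ True] by metis
      next
        case False2: False
        have "rp (np n L v (e (k1 - n))) = rp (np n L v (e (k2 - n)))"
          using False False2 eq k1 k2 by (simp add: H_def)
        moreover have e1: "e (k1 - n) \<in> Idx n L" using eI False k1 by simp
        moreover have e2: "e (k2 - n) \<in> Idx n L" using eI False2 k2 by simp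
        ultimately have "e (k1 - n) = e (k2 - n)" using np_inj[OF v] by blast
        then have "k1 - n = k2 - n" using e False False2 k1 k2 unfolding bij_betw_def inj_on_def by auto
        then show ?thesis using False False2 by simp
      qed
    qed
  qed
  have cHprod: "continuous_map A (product_topology (\<lambda>_. RP2) {..<n+m}) H"
    unfolding continuous_map_componentwise
  proof (intro conjI ballI)
    show "H ` topspace A \<subseteq> extensional {..<n+m}" by (auto simp: H_def)
    fix k assume k: "k \<in> {..<n+m}"
    show "continuous_map A RP2 (\<lambda>x. H x k)"
    proof (cases "k < n")
      case True
      have "continuous_map A RP2 (rp \<circ> (\<lambda>v. v k))"
        unfolding A_def using True by (intro continuous_map_compose[OF cont_proj_sphere continuous_map_rp]) auto
      then show ?thesis
        by (rule continuous_map_eq) (use k True in \<open>simp add: H_def\<close>)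
    next
      case False
      then have idx: "e (k - n) \<in> Idx n L" using k eI by simp
      then obtain i j b l where ie: "e (k - n) = ((i, j), b, l)" by (metis prod.collapse)
      have c1: "continuous_map A euclidean (\<lambda>v. np n L v ((i, j), b, l))"
        unfolding A_def using idx ie by (intro cont_np) simp
      have "continuous_map A (top_of_set (sphere 0 1)) (\<lambda>v. np n L v ((i, j), b, l))"
      proof (rule continuous_map_into_subtopology[OF c1])
        show "(\<lambda>v. np n L v ((i, j), b, l)) \<in> topspace A \<rightarrow> sphere 0 1"
          using np_props(1) idx ie tA by (auto simp: Pi_iff)
      qed
      then have "continuous_map A RP2 (rp \<circ> (\<lambda>v. np n L v ((i, j), b, l)))"
        by (rule continuous_map_compose[OF _ continuous_map_rp])
      then show ?thesis
        by (rule continuous_map_eq) (use k False ie in \<open>simp add: H_def\<close>)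
    qed
  qed
  have cH: "continuous_map A (conf RP2 (n+m)) H"
    unfolding conf_def continuous_map_in_subtopology
    using cHprod Hinj tA by (auto simp: Pi_iff)
  have cPH: "continuous_map A (pconf RP2 n m) ((\<lambda>p. (p ` {..<n}, p ` {n..<n+m})) \<circ> H)"
    unfolding pconf_def by (rule continuous_map_compose[OF cH continuous_map_quotient_topology])
  have eqv: "((\<lambda>p. (p ` {..<n}, p ` {n..<n+m})) \<circ> H) v = (s \<circ> ((\<lambda>p. p ` {..<n}) \<circ> Fm)) v"
    if v: "v \<in> topspace A" for v
  proof -
    have v': "v \<in> Lft n" using v tA by simp
    have 1: "H v ` {..<n} = (\<lambda>i. rp (v i)) ` {..<n}" by (auto simp: H_def)
    have 2: "Fm v ` {..<n} = (\<lambda>i. rp (v i)) ` {..<n}" by (auto simp: Fm_def)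
    have "H v ` {n..<n+m} = (\<lambda>k. rp (np n L v (e k))) ` {0..<m}"
    proof (intro equalityI subsetI)
      fix z assume "z \<in> H v ` {n..<n+m}"
      then obtain k where k: "k \<in> {n..<n+m}" "z = H v k" by auto
      then show "z \<in> (\<lambda>k. rp (np n L v (e k))) ` {0..<m}"
        by (auto simp: H_def intro!: image_eqI[where x="k - n"])
    next
      fix z assume "z \<in> (\<lambda>k. rp (np n L v (e k))) ` {0..<m}"
      then obtain k where k: "k < m" "z = rp (np n L v (e k))" by auto
      then show "z \<in> H v ` {n..<n+m}"
        by (auto simp: H_def intro!: image_eqI[where x="k + n"])
    qed
    also have "\<dots> = (\<lambda>idx. rp (np n L v idx)) ` (e ` {0..<m})" by (simp add: image_image)
    also have "\<dots> = (\<lambda>idx. rp (np n L v idx)) ` Idx n L" using e by (simp add: bij_betw_def)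
    also have "\<dots> = Newset L ((\<lambda>i. rp (v i)) ` {..<n})" using Newset_eq[OF v'] by simp
    finally show ?thesis using 1 2 by (simp add: s_def)
  qed
  have "continuous_map A (pconf RP2 n m) (s \<circ> ((\<lambda>p. p ` {..<n}) \<circ> Fm))"
    by (rule continuous_map_eq[OF cPH eqv])
  then have cs: "continuous_map (uconf RP2 n) (pconf RP2 n m) s"
    by (rule continuous_compose_quotient_map[OF qU])
  have "\<forall>x \<in> topspace (uconf RP2 n). fst (s x) = x" by (simp add: s_def)
  then show ?thesis unfolding has_cross_section_def m_def[symmetric] using cs by blast
qed

lemma card_offd: "card (offd n) = n * (n - 1)"
proof -
  have "offd n = ({..<n} \<times> {..<n}) - (\<lambda>i. (i, i)) ` {..<n}"
    by (auto simp: offd_def)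
  moreover have "card ((\<lambda>i. (i, i)) ` {..<n}) = n" by (simp add: card_image inj_on_def)
  moreover have sub: "(\<lambda>i. (i, i)) ` {..<n} \<subseteq> {..<n} \<times> {..<n}" by auto
  ultimately have "card (offd n) = card ({..<n} \<times> {..<n}) - n"
    using card_Diff_subset[OF finite_imageI[OF finite_lessThan] sub] by simp
  then have "card (offd n) = n * n - n" by (simp add: card_cartesian_product)
  then show ?thesis by (simp add: diff_mult_distrib2)
qed

lemma card_Idx: "card (Idx n L) = n * (n - 1) * 2 * L"
  unfolding Idx_def by (simp add: card_cartesian_product card_offd)


theorem theoremD:
  fixes n :: nat
  assumes "n \<ge> 3"
  shows "(\<forall>k::nat. k \<ge> 1 \<longrightarrow> has_cross_section RP2 n (k * n * (2*n - 1) * (2*n - 2)))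
         \<and> has_cross_section RP2 n (2 * n * (n - 1))"
proof
  show "\<forall>k::nat. k \<ge> 1 \<longrightarrow> has_cross_section RP2 n (k * n * (2*n - 1) * (2*n - 2))"
  proof (intro allI impI)
    fix k :: nat assume k: "k \<ge> 1"
    define a where "a = n - 1"
    define b where "b = 2 * n - 1"
    have "2 * n - 2 = 2 * a" unfolding a_def by simp
    then have "k * n * (2*n - 1) * (2*n - 2) = n * a * 2 * (k * b)"
      unfolding b_def[symmetric] by (simp add: ac_simps)
    also have "\<dots> = card (Idx n (k * b))" by (simp add: card_Idx a_def)
    finally have eq: "k * n * (2*n - 1) * (2*n - 2) = card (Idx n (k * b))" .
    have "k * b > 0" using k assms unfolding b_def by simp
    then show "has_cross_section RP2 n (k * n * (2*n - 1) * (2*n - 2))"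
      unfolding eq by (rule main_cs)
  qed
  have eq: "2 * n * (n - 1) = card (Idx n 1)" by (simp add: card_Idx)
  show "has_cross_section RP2 n (2 * n * (n - 1))"
    unfolding eq by (rule main_cs) simp
qed

end
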